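(* Let $G$ be a graph and $k\ge 1$ an integer. Then $\mathrm{diam}(G)\le 2k+1$ if and only if every $k$-packing of $G$ is a general position set of $G$.
   Context: All graphs are finite, simple and connected; $\mathrm{diam}(G)$ is the maximum distance between two vertices of $G$. A set $S$ of vertices is a $k$-packing if $d(u,v)>k$ for all distinct $u,v\in S$. A set $S$ of vertices is a general position set if no three vertices of $S$ lie on a common geodesic (shortest path) of $G$. *)

theory Defs
  imports Main
begin

definition simple_graph :: "'a set \<Rightarrow> ('a \<Rightarrow> 'a \<Rightarrow> bool) \<Rightarrow> bool" where
  "simple_graph V E \<longleftrightarrow> finite V \<and> V \<noteq> {} \<and>
     (\<forall>u v. E u v \<longrightarrow> u \<in> V \<and> v \<in> V) \<and>
     (\<forall>u v. E u v \<longrightarrow> E v u) \<and> (\<forall>u. \<not> E u u)"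

text \<open>A walk is a nonempty vertex list of V with consecutive vertices adjacent;
  its length (number of edges) is length xs - 1.\<close>
definition walk :: "'a set \<Rightarrow> ('a \<Rightarrow> 'a \<Rightarrow> bool) \<Rightarrow> 'a list \<Rightarrow> bool" where
  "walk V E xs \<longleftrightarrow> xs \<noteq> [] \<and> set xs \<subseteq> V \<and>
     (\<forall>i. Suc i < length xs \<longrightarrow> E (xs ! i) (xs ! Suc i))"

definition walk_between :: "'a set \<Rightarrow> ('a \<Rightarrow> 'a \<Rightarrow> bool) \<Rightarrow> 'a \<Rightarrow> 'a \<Rightarrow> 'a list \<Rightarrow> bool" where
  "walk_between V E u v xs \<longleftrightarrow> walk V E xs \<and> hd xs = u \<and> last xs = v"

definition connected_graph :: "'a set \<Rightarrow> ('a \<Rightarrow> 'a \<Rightarrow> bool) \<Rightarrow> bool" where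
  "connected_graph V E \<longleftrightarrow> (\<forall>u\<in>V. \<forall>v\<in>V. \<exists>xs. walk_between V E u v xs)"

definition dist :: "'a set \<Rightarrow> ('a \<Rightarrow> 'a \<Rightarrow> bool) \<Rightarrow> 'a \<Rightarrow> 'a \<Rightarrow> nat" where
  "dist V E u v = (LEAST n. \<exists>xs. walk_between V E u v xs \<and> length xs = Suc n)"

definition diam :: "'a set \<Rightarrow> ('a \<Rightarrow> 'a \<Rightarrow> bool) \<Rightarrow> nat" where
  "diam V E = Max {dist V E u v | u v. u \<in> V \<and> v \<in> V}"

definition geodesic :: "'a set \<Rightarrow> ('a \<Rightarrow> 'a \<Rightarrow> bool) \<Rightarrow> 'a \<Rightarrow> 'a \<Rightarrow> 'a list \<Rightarrow> bool" where
  "geodesic V E u v xs \<longleftrightarrow> walk_between V E u v xs \<and> length xs = Suc (dist V E u v)"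

definition k_packing :: "'a set \<Rightarrow> ('a \<Rightarrow> 'a \<Rightarrow> bool) \<Rightarrow> nat \<Rightarrow> 'a set \<Rightarrow> bool" where
  "k_packing V E k S \<longleftrightarrow> S \<subseteq> V \<and> (\<forall>u\<in>S. \<forall>v\<in>S. u \<noteq> v \<longrightarrow> dist V E u v > k)"

definition gp_set :: "'a set \<Rightarrow> ('a \<Rightarrow> 'a \<Rightarrow> bool) \<Rightarrow> 'a set \<Rightarrow> bool" where
  "gp_set V E S \<longleftrightarrow> S \<subseteq> V \<and> (\<forall>x\<in>S. \<forall>y\<in>S. \<forall>z\<in>S. x \<noteq> y \<and> y \<noteq> z \<and> x \<noteq> z \<longrightarrow>
     \<not> (\<exists>u v xs. geodesic V E u v xs \<and> x \<in> set xs \<and> y \<in> set xs \<and> z \<in> set xs))"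

end

theory Submission imports Defs begin

lemma walk_sub:
  assumes "walk V E xs" "i \<le> j" "j < length xs"
  shows "walk_between V E (xs!i) (xs!j) (take (Suc (j-i)) (drop i xs))"
    and "length (take (Suc (j-i)) (drop i xs)) = Suc (j-i)"
proof -
  have len: "length (take (Suc (j-i)) (drop i xs)) = Suc (j-i)" using assms by auto
  show "length (take (Suc (j-i)) (drop i xs)) = Suc (j-i)" by (rule len)
  have nth: "\<And>m. m \<le> j - i \<Longrightarrow> take (Suc (j-i)) (drop i xs) ! m = xs ! (i+m)"
    using assms by auto
  have "set (take (Suc (j-i)) (drop i xs)) \<subseteq> set xs"
    by (meson set_drop_subset set_take_subset subset_trans)
  moreover have "\<forall>m. Suc m < length (take (Suc (j-i)) (drop i xs)) \<longrightarrow>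
     E (take (Suc (j-i)) (drop i xs) ! m) (take (Suc (j-i)) (drop i xs) ! Suc m)"
  proof (intro allI impI)
    fix m assume "Suc m < length (take (Suc (j-i)) (drop i xs))"
    then have "Suc m \<le> j - i" using len by simp
    then have "Suc (i+m) < length xs" using assms by simp
    then show "E (take (Suc (j-i)) (drop i xs) ! m) (take (Suc (j-i)) (drop i xs) ! Suc m)"
      using assms(1) nth[of m] nth[of "Suc m"] \<open>Suc m \<le> j - i\<close> unfolding walk_def by auto
  qed
  moreover have "hd (take (Suc (j-i)) (drop i xs)) = xs ! i"
    using nth[of 0] len by (simp add: hd_conv_nth)
  moreover have "last (take (Suc (j-i)) (drop i xs)) = xs ! j"
    using nth[of "j-i"] len assms by (simp add: last_conv_nth)
  moreover have "set xs \<subseteq> V" using assms(1) unfolding walk_def by blast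
  moreover have "take (Suc (j-i)) (drop i xs) \<noteq> []" using len by (metis Zero_not_Suc list.size(3))
  ultimately show "walk_between V E (xs!i) (xs!j) (take (Suc (j-i)) (drop i xs))"
    unfolding walk_between_def walk_def by blast
qed

lemma walk_append:
  assumes "walk_between V E a b p" "walk_between V E b c q"
  shows "walk_between V E a c (p @ tl q)"
proof -
  obtain q' where q: "q = b # q'" using assms(2) unfolding walk_between_def walk_def
    by (metis list.collapse)
  have p: "p \<noteq> []" "last p = b" "hd p = a" using assms(1) unfolding walk_between_def walk_def by auto
  have adj: "E (xs!i) (xs!Suc i)" if "walk V E xs" "Suc i < length xs" for xs i
    using that unfolding walk_def by auto
  have "\<forall>i. Suc i < length (p @ q') \<longrightarrow> E ((p @ q') ! i) ((p @ q') ! Suc i)"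
  proof (intro allI impI)
    fix i assume i: "Suc i < length (p @ q')"
    consider "Suc i < length p" | "Suc i = length p" | "Suc i > length p" by linarith
    then show "E ((p @ q') ! i) ((p @ q') ! Suc i)"
    proof cases
      case 1 then show ?thesis using adj[of p i] assms(1) unfolding walk_between_def
        by (simp add: nth_append)
    next
      case 2
      have "(p @ q') ! i = b" using 2 p by (simp add: nth_append last_conv_nth del: One_nat_def)
        (metis diff_Suc_1)
      moreover have "(p @ q') ! Suc i = q ! 1" using 2 q by (simp add: nth_append)
      moreover have "E (q!0) (q!1)" using adj[of q 0] assms(2) q i 2 unfolding walk_between_def by simp
      ultimately show ?thesis using q by simp
    next
      case 3
      have "(p @ q') ! i = q ! (i - length p + 1)" using 3 q by (simp add: nth_append)
      moreover have "(p @ q') ! Suc i = q ! Suc (i - length p + 1)" using 3 q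
        by (simp add: nth_append Suc_diff_le)
      moreover have "Suc (i - length p + 1) < length q" using i 3 q by simp
      ultimately show ?thesis using adj[of q "i - length p + 1"] assms(2) unfolding walk_between_def by simp
    qed
  qed
  moreover have "last (p @ q') = c"
    using assms(2) p q unfolding walk_between_def by (cases "q' = []") auto
  ultimately show ?thesis using assms p q unfolding walk_between_def walk_def by auto
qed

lemma dist_le:
  assumes "walk_between V E u v xs" shows "dist V E u v \<le> length xs - 1"
proof -
  have "xs \<noteq> []" using assms unfolding walk_between_def walk_def by auto
  then have "\<exists>ys. walk_between V E u v ys \<and> length ys = Suc (length xs - 1)" using assms by auto
  then show ?thesis unfolding dist_def by (rule Least_le)
qed

lemma geo_ex:
  assumes "connected_graph V E" "u \<in> V" "v \<in> V"
  shows "\<exists>xs. geodesic V E u v xs"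
proof -
  obtain xs where xs: "walk_between V E u v xs" using assms unfolding connected_graph_def by blast
  then have "xs \<noteq> []" unfolding walk_between_def walk_def by auto
  then have "\<exists>n xs. walk_between V E u v xs \<and> length xs = Suc n" using xs
    by (metis Suc_pred length_greater_0_conv)
  then have "\<exists>xs. walk_between V E u v xs \<and> length xs = Suc (dist V E u v)"
    unfolding dist_def by (rule LeastI_ex)
  then show ?thesis unfolding geodesic_def by blast
qed

lemma walk_in: "walk_between V E u v xs \<Longrightarrow> u \<in> V \<and> v \<in> V"
  unfolding walk_between_def walk_def by (metis hd_in_set last_in_set subsetD)

lemma tri:
  assumes "connected_graph V E" "a \<in> V" "b \<in> V" "c \<in> V"
  shows "dist V E a c \<le> dist V E a b + dist V E b c"
proof -
  obtain p where p: "geodesic V E a b p" using geo_ex[OF assms(1,2,3)] by blast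
  obtain q where q: "geodesic V E b c q" using geo_ex[OF assms(1,3,4)] by blast
  have pw: "walk_between V E a b p" "length p = Suc (dist V E a b)" using p unfolding geodesic_def by auto
  have qw: "walk_between V E b c q" "length q = Suc (dist V E b c)" using q unfolding geodesic_def by auto
  have "walk_between V E a c (p @ tl q)" by (rule walk_append[OF pw(1) qw(1)])
  from dist_le[OF this] show ?thesis using pw(2) qw(2) by simp
qed

lemma geo_sub:
  assumes "connected_graph V E" "geodesic V E u v xs" "i \<le> l" "l < length xs"
  shows "dist V E (xs!i) (xs!l) = l - i"
proof -
  have w: "walk V E xs" and h: "hd xs = u" "last xs = v" and len: "length xs = Suc (dist V E u v)"
    using assms(2) unfolding geodesic_def walk_between_def by auto
  have ne: "xs \<noteq> []" using len by auto
  have 1: "dist V E (xs!i) (xs!l) \<le> l - i"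
    using dist_le[OF walk_sub(1)[OF w assms(3,4)]] walk_sub(2)[OF w assms(3,4)] by simp
  have a2: "0 \<le> i" "i < length xs" using assms by auto
  have "dist V E (xs!0) (xs!i) \<le> i"
    using dist_le[OF walk_sub(1)[OF w a2]] walk_sub(2)[OF w a2] by simp
  moreover have "xs!0 = u" using h ne by (simp add: hd_conv_nth)
  ultimately have 2: "dist V E u (xs!i) \<le> i" by simp
  have a3: "l \<le> length xs - 1" "length xs - 1 < length xs" using assms by auto
  have "dist V E (xs!l) (xs!(length xs - 1)) \<le> length xs - 1 - l"
    using dist_le[OF walk_sub(1)[OF w a3]] walk_sub(2)[OF w a3] by simp
  moreover have "xs!(length xs - 1) = v" using h ne by (simp add: last_conv_nth)
  ultimately have 3: "dist V E (xs!l) v \<le> length xs - 1 - l" by simp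
  have inV: "set xs \<subseteq> V" using w unfolding walk_def by blast
  have V: "u \<in> V" "v \<in> V" "xs!i \<in> V" "xs!l \<in> V"
    using inV nth_mem[of i xs] nth_mem[of l xs] a2 assms(4) hd_in_set[OF ne] last_in_set[OF ne] h by auto
  have t1: "dist V E u v \<le> dist V E u (xs!i) + dist V E (xs!i) v" using tri[OF assms(1) V(1,3,2)] .
  have t2: "dist V E (xs!i) v \<le> dist V E (xs!i) (xs!l) + dist V E (xs!l) v" using tri[OF assms(1) V(3,4,2)] .
  have ar: "\<And>D a b c x i l::nat. D \<le> a + x \<Longrightarrow> x \<le> b + c \<Longrightarrow> a \<le> i \<Longrightarrow> c \<le> D - l
     \<Longrightarrow> b \<le> l - i \<Longrightarrow> i \<le> l \<Longrightarrow> l \<le> D \<Longrightarrow> b = l - i" by linarith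
  have "l \<le> dist V E u v" using len assms(4) by simp
  moreover have "length xs - 1 - l = dist V E u v - l" using len by simp
  ultimately show ?thesis using ar[OF t1 t2 2 _ 1 assms(3)] 3 by simp
qed


lemma walk_rev:
  assumes "\<forall>u v. E u v \<longrightarrow> E v u" "walk_between V E u v xs"
  shows "walk_between V E v u (rev xs)"
proof -
  have w: "xs \<noteq> []" "set xs \<subseteq> V" "\<forall>i. Suc i < length xs \<longrightarrow> E (xs ! i) (xs ! Suc i)"
    "hd xs = u" "last xs = v" using assms(2) unfolding walk_between_def walk_def by auto
  have "\<forall>i. Suc i < length (rev xs) \<longrightarrow> E (rev xs ! i) (rev xs ! Suc i)"
  proof (intro allI impI)
    fix i assume i: "Suc i < length (rev xs)"
    define j where "j = length xs - Suc (Suc i)"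
    have j: "Suc j < length xs" "rev xs ! i = xs ! Suc j" "rev xs ! Suc i = xs ! j"
      using i unfolding j_def by (auto simp: rev_nth Suc_diff_Suc)
    show "E (rev xs ! i) (rev xs ! Suc i)" using j w(3) assms(1) by auto
  qed
  then show ?thesis using w unfolding walk_between_def walk_def
    by (simp add: hd_rev last_rev)
qed

lemma dist_sym:
  assumes "\<forall>u v. E u v \<longrightarrow> E v u" "connected_graph V E" "u \<in> V" "v \<in> V"
  shows "dist V E u v = dist V E v u"
proof -
  obtain p where p: "geodesic V E u v p" using geo_ex[OF assms(2,3,4)] by blast
  obtain q where q: "geodesic V E v u q" using geo_ex[OF assms(2,4,3)] by blast
  have "dist V E v u \<le> length (rev p) - 1"
    using dist_le[OF walk_rev[OF assms(1)]] p unfolding geodesic_def by blast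
  moreover have "dist V E u v \<le> length (rev q) - 1"
    using dist_le[OF walk_rev[OF assms(1)]] q unfolding geodesic_def by blast
  ultimately show ?thesis using p q unfolding geodesic_def by simp
qed

lemma dist_le_diam:
  assumes "finite V" "u \<in> V" "v \<in> V"
  shows "dist V E u v \<le> diam V E"
proof -
  have "{dist V E u v | u v. u \<in> V \<and> v \<in> V} = (\<lambda>(u,v). dist V E u v) ` (V \<times> V)" by auto
  then have "finite {dist V E u v | u v. u \<in> V \<and> v \<in> V}" using assms(1) by simp
  then show ?thesis unfolding diam_def using assms by (intro Max_ge) auto
qed

lemma diam_attained:
  assumes "finite V" "V \<noteq> {}"
  shows "\<exists>u\<in>V. \<exists>v\<in>V. dist V E u v = diam V E"
proof -
  have "{dist V E u v | u v. u \<in> V \<and> v \<in> V} = (\<lambda>(u,v). dist V E u v) ` (V \<times> V)" by auto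
  then have "finite {dist V E u v | u v. u \<in> V \<and> v \<in> V}" using assms(1) by simp
  moreover have "{dist V E u v | u v. u \<in> V \<and> v \<in> V} \<noteq> {}" using assms(2) by auto
  ultimately have "diam V E \<in> {dist V E u v | u v. u \<in> V \<and> v \<in> V}" unfolding diam_def
    by (rule Max_in)
  then obtain u v where "diam V E = dist V E u v" "u \<in> V" "v \<in> V" by blast
  then show ?thesis by metis
qed

lemma three_idx:
  assumes "connected_graph V E" "geodesic V E u v xs" "a < b" "b < c" "c < length xs"
    "dist V E (xs!a) (xs!b) > k" "dist V E (xs!b) (xs!c) > k"
  shows "dist V E (xs!a) (xs!c) \<ge> 2*k+2"
proof -
  have "dist V E (xs!a) (xs!b) = b - a" using geo_sub[OF assms(1,2)] assms by simp
  moreover have "dist V E (xs!b) (xs!c) = c - b" using geo_sub[OF assms(1,2)] assms by simp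
  moreover have "dist V E (xs!a) (xs!c) = c - a" using geo_sub[OF assms(1,2)] assms by simp
  ultimately show ?thesis using assms by linarith
qed

theorem proposition4p1:
  fixes V :: "'a set" and E :: "'a \<Rightarrow> 'a \<Rightarrow> bool" and k :: nat
  assumes "simple_graph V E" and "connected_graph V E" and "k \<ge> 1"
  shows "diam V E \<le> 2 * k + 1 \<longleftrightarrow> (\<forall>S. k_packing V E k S \<longrightarrow> gp_set V E S)"
proof -
  have fin: "finite V" and ne: "V \<noteq> {}" and sym: "\<forall>u v. E u v \<longrightarrow> E v u"
    using assms(1) unfolding simple_graph_def by auto
  show ?thesis
  proof (intro iffI)
    assume dm: "diam V E \<le> 2 * k + 1"
    show "\<forall>S. k_packing V E k S \<longrightarrow> gp_set V E S"
    proof (intro allI impI)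
      fix S assume S: "k_packing V E k S"
      have SV: "S \<subseteq> V" and pk: "\<And>x y. x \<in> S \<Longrightarrow> y \<in> S \<Longrightarrow> x \<noteq> y \<Longrightarrow> dist V E x y > k"
        using S unfolding k_packing_def by auto
      have no: False if "geodesic V E u v xs" "a < b" "b < c" "c < length xs"
        "xs!a \<in> S" "xs!b \<in> S" "xs!c \<in> S" "xs!a \<noteq> xs!b" "xs!b \<noteq> xs!c" "xs!a \<noteq> xs!c"
        for u v xs a b c
      proof -
        have "dist V E (xs!a) (xs!c) \<ge> 2*k+2"
          using three_idx[OF assms(2) that(1-4)] pk that by blast
        moreover have "dist V E (xs!a) (xs!c) \<le> diam V E"
          using dist_le_diam[OF fin] SV that by blast
        ultimately show False using dm by linarith
      qed
      show "gp_set V E S" unfolding gp_set_def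
      proof (intro conjI SV ballI impI notI)
        fix x y z assume xyz: "x \<in> S" "y \<in> S" "z \<in> S" "x \<noteq> y \<and> y \<noteq> z \<and> x \<noteq> z"
          and "\<exists>u v xs. geodesic V E u v xs \<and> x \<in> set xs \<and> y \<in> set xs \<and> z \<in> set xs"
        then obtain u v xs where g: "geodesic V E u v xs" "x \<in> set xs" "y \<in> set xs" "z \<in> set xs"
          by blast
        obtain i where i: "i < length xs" "xs!i = x" using g(2) by (auto simp: in_set_conv_nth)
        obtain j where j: "j < length xs" "xs!j = y" using g(3) by (auto simp: in_set_conv_nth)
        obtain l where l: "l < length xs" "xs!l = z" using g(4) by (auto simp: in_set_conv_nth)
        have "i \<noteq> j" "j \<noteq> l" "i \<noteq> l" using i j l xyz by auto
        then consider "i < j" "j < l" | "i < l" "l < j" | "j < i" "i < l" | "j < l" "l < i"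
          | "l < i" "i < j" | "l < j" "j < i" by linarith
        then show False
        proof cases
          case 1 then show ?thesis using no[OF g(1), of i j l] i j l xyz by auto
        next
          case 2 then show ?thesis using no[OF g(1), of i l j] i j l xyz by auto
        next
          case 3 then show ?thesis using no[OF g(1), of j i l] i j l xyz by auto
        next
          case 4 then show ?thesis using no[OF g(1), of j l i] i j l xyz by auto
        next
          case 5 then show ?thesis using no[OF g(1), of l i j] i j l xyz by auto
        next
          case 6 then show ?thesis using no[OF g(1), of l j i] i j l xyz by auto
        qed
      qed
    qed
  next
    assume H: "\<forall>S. k_packing V E k S \<longrightarrow> gp_set V E S"
    show "diam V E \<le> 2 * k + 1"
    proof (rule ccontr)
      assume "\<not> diam V E \<le> 2 * k + 1"
      then have big: "diam V E \<ge> 2*k+2" by simp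
      obtain u v where uv: "u \<in> V" "v \<in> V" "dist V E u v = diam V E"
        using diam_attained[OF fin ne] by blast
      obtain xs where g: "geodesic V E u v xs" using geo_ex[OF assms(2) uv(1,2)] by blast
      have len: "length xs = Suc (dist V E u v)" using g unfolding geodesic_def by simp
      have inV: "set xs \<subseteq> V" using g unfolding geodesic_def walk_between_def walk_def by blast
      define a where "a = xs!0"
      define b where "b = xs!(k+1)"
      define c where "c = xs!(2*k+2)"
      have lt: "2*k+2 < length xs" using len uv big by simp
      have dab: "dist V E a b = k+1" unfolding a_def b_def using geo_sub[OF assms(2) g, of 0 "k+1"] lt by simp
      have dbc: "dist V E b c = k+1" unfolding c_def b_def using geo_sub[OF assms(2) g, of "k+1" "2*k+2"] lt by simp
      have dac: "dist V E a c = 2*k+2" unfolding a_def c_def using geo_sub[OF assms(2) g, of 0 "2*k+2"] lt by simp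
      have mem: "a \<in> set xs" "b \<in> set xs" "c \<in> set xs" unfolding a_def b_def c_def
      proof -
        have l0: "0 < length xs" "k+1 < length xs" using lt by linarith+
        show "xs!0 \<in> set xs" by (rule nth_mem[OF l0(1)])
        show "xs!(k+1) \<in> set xs" by (rule nth_mem[OF l0(2)])
        show "xs!(2*k+2) \<in> set xs" by (rule nth_mem[OF lt])
      qed
      then have V: "a \<in> V" "b \<in> V" "c \<in> V" using inV by auto
      have d0: "dist V E x x = 0" if "x \<in> V" for x
      proof -
        have "walk_between V E x x [x]" using that unfolding walk_between_def walk_def by auto
        from dist_le[OF this] show ?thesis by simp
      qed
      have ne: "a \<noteq> b" "b \<noteq> c" "a \<noteq> c" using dab dbc dac d0 V by auto
      have dba: "dist V E b a = k+1" using dab dist_sym[OF sym assms(2) V(1,2)] by simp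
      have dcb: "dist V E c b = k+1" using dbc dist_sym[OF sym assms(2) V(2,3)] by simp
      have dca: "dist V E c a = 2*k+2" using dac dist_sym[OF sym assms(2) V(1,3)] by simp
      have "k_packing V E k {a,b,c}" unfolding k_packing_def
        using V dab dbc dac dba dcb dca by auto
      then have "gp_set V E {a,b,c}" using H by blast
      moreover have "geodesic V E u v xs \<and> a \<in> set xs \<and> b \<in> set xs \<and> c \<in> set xs"
        using g mem by blast
      ultimately show False
      proof -
        assume gp: "gp_set V E {a,b,c}" and ex: "geodesic V E u v xs \<and> a \<in> set xs \<and> b \<in> set xs \<and> c \<in> set xs"
        have "\<forall>x\<in>{a,b,c}. \<forall>y\<in>{a,b,c}. \<forall>z\<in>{a,b,c}. x \<noteq> y \<and> y \<noteq> z \<and> x \<noteq> z \<longrightarrow>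
           \<not> (\<exists>u v xs. geodesic V E u v xs \<and> x \<in> set xs \<and> y \<in> set xs \<and> z \<in> set xs)"
          using gp unfolding gp_set_def by (rule conjunct2)
        then have "a \<noteq> b \<and> b \<noteq> c \<and> a \<noteq> c \<longrightarrow>
           \<not> (\<exists>u v xs. geodesic V E u v xs \<and> a \<in> set xs \<and> b \<in> set xs \<and> c \<in> set xs)"
          by simp
        then show False using ne ex by blast
      qed
    qed
  qed
qed

end
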